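(* If $A\in G$ fixes $Q$, then for any $a,b\in\mathrm{supp}\,Q$, $\langle Ab,a\rangle\ne0$ implies $a=b$ or $a$ $Q$-dominates $b$.
   Context: $\Gamma$ is a finite simplicial graph with vertex set $X$, $|X|=2g$, $A_\Gamma$ its right-angled Artin group, $H_\Gamma$ its abelianization, $\langle-,-\rangle$ the inner product on $H_\Gamma$ making the images of $X$ orthonormal; letters of $L=X\cup X^{-1}$ also denote their images in $H_\Gamma$; $\bar u\in X$ is the vertex of $u\in L$. $\mathrm{lk}(v)$ = neighbours, $\mathrm{st}(v)=\mathrm{lk}(v)\cup\{v\}$; $v\ge w$ iff $\mathrm{lk}(w)\subset\mathrm{st}(v)$, extended to letters via vertices. Fix a bijection $u\mapsto u^*$ of $L$ with $(u^* )^*=u^{-1}$ and letters $a_1,\dots,a_g$ whose vertices with those of $a_1^*,\dots,a_g^*$ are all of $X$; $Q=\sum\{[a_i]\wedge[a_i^*]:\bar a_i^*\text{ adjacent to }\bar a_i\}\in\Lambda^2H_\Gamma$, assumed nonzero, with diagonal action of $\mathrm{Aut}\,H_\Gamma$. $\mathrm{supp}\,Q$ = set of vertices appearing in $Q$. $G\le\mathrm{Aut}\,H_\Gamma$ is generated by the maps $E_{a,b}$ ($a\in X$, $b\in\mathrm{supp}\,Q$, $a\ge b$, $a\ne b$; $b\mapsto b+a$, other basis vectors fixed) and $N_b$ ($b\in\mathrm{supp}\,Q$; $b\mapsto -b$, others fixed). $Q$-domination on $\mathrm{supp}\,Q$: $a$ $Q$-dominates $b$ if either $a\ne\bar{b^*}$,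 $a\ge b$ and $b^*\ge a^*$; or $a=\bar{b^*}$ and $a\ge b$. *)

theory Defs
  imports Main
begin

(* Vertices: a finite type 'v (so X = UNIV).  H_Gamma = Z^X is modelled as 'v => int,
   the vertex x corresponding to the basis vector bvec x. *)

type_synonym 'v letter = "'v \<times> bool"   (* (x, True) = x,  (x, False) = x^{-1} *)

definition lk :: "('v \<Rightarrow> 'v \<Rightarrow> bool) \<Rightarrow> 'v \<Rightarrow> 'v set" where
  "lk adj v = {w. adj v w}"

definition st :: "('v \<Rightarrow> 'v \<Rightarrow> bool) \<Rightarrow> 'v \<Rightarrow> 'v set" where
  "st adj v = insert v (lk adj v)"

definition dom_geq :: "('v \<Rightarrow> 'v \<Rightarrow> bool) \<Rightarrow> 'v \<Rightarrow> 'v \<Rightarrow> bool" where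
  "dom_geq adj v w \<longleftrightarrow> lk adj w \<subseteq> st adj v"

definition bvec :: "'v \<Rightarrow> 'v \<Rightarrow> int" where
  "bvec x = (\<lambda>y. if y = x then 1 else 0)"

definition lvec :: "'v letter \<Rightarrow> 'v \<Rightarrow> int" where
  "lvec u = (\<lambda>y. if y = fst u then (if snd u then 1 else -1) else 0)"

definition linv :: "'v letter \<Rightarrow> 'v letter" where
  "linv u = (fst u, \<not> snd u)"

definition ip :: "('v::finite \<Rightarrow> int) \<Rightarrow> ('v \<Rightarrow> int) \<Rightarrow> int" where
  "ip h k = (\<Sum>x\<in>UNIV. h x * k x)"

(* Lambda^2 H_Gamma modelled faithfully as antisymmetric integer tensors:
   u \<and> w  |->  (x,y) |-> u x * w y - u y * w x *)
definition wedge :: "('v \<Rightarrow> int) \<Rightarrow> ('v \<Rightarrow> int) \<Rightarrow> 'v \<Rightarrow> 'v \<Rightarrow> int" where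
  "wedge u w = (\<lambda>x y. u x * w y - u y * w x)"

(* A applied diagonally to Q = sum of [a_i] wedge [star a_i] over i with adjacent vertices *)
definition Qact ::
  "('v \<Rightarrow> 'v \<Rightarrow> bool) \<Rightarrow> ('v letter \<Rightarrow> 'v letter) \<Rightarrow> (nat \<Rightarrow> 'v letter) \<Rightarrow> nat
     \<Rightarrow> (('v \<Rightarrow> int) \<Rightarrow> ('v \<Rightarrow> int)) \<Rightarrow> 'v \<Rightarrow> 'v \<Rightarrow> int" where
  "Qact adj star a g A = (\<lambda>x y. \<Sum>i\<in>{i. i < g \<and> adj (fst (a i)) (fst (star (a i)))}.
       wedge (A (lvec (a i))) (A (lvec (star (a i)))) x y)"

definition Qform ::
  "('v \<Rightarrow> 'v \<Rightarrow> bool) \<Rightarrow> ('v letter \<Rightarrow> 'v letter) \<Rightarrow> (nat \<Rightarrow> 'v letter) \<Rightarrow> nat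
     \<Rightarrow> 'v \<Rightarrow> 'v \<Rightarrow> int" where
  "Qform adj star a g = Qact adj star a g id"

definition suppQ ::
  "('v \<Rightarrow> 'v \<Rightarrow> bool) \<Rightarrow> ('v letter \<Rightarrow> 'v letter) \<Rightarrow> (nat \<Rightarrow> 'v letter) \<Rightarrow> nat \<Rightarrow> 'v set" where
  "suppQ adj star a g = {x. \<exists>i<g. adj (fst (a i)) (fst (star (a i))) \<and>
                              (x = fst (a i) \<or> x = fst (star (a i)))}"

(* transvection E_{a,b}: b |-> b + a, other basis vectors fixed *)
definition Etr :: "'v \<Rightarrow> 'v \<Rightarrow> ('v \<Rightarrow> int) \<Rightarrow> 'v \<Rightarrow> int" where
  "Etr p q h = (\<lambda>x. h x + (if x = p then h q else 0))"

definition Etr_inv :: "'v \<Rightarrow> 'v \<Rightarrow> ('v \<Rightarrow> int) \<Rightarrow> 'v \<Rightarrow> int" where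
  "Etr_inv p q h = (\<lambda>x. h x - (if x = p then h q else 0))"

definition Ninv :: "'v \<Rightarrow> ('v \<Rightarrow> int) \<Rightarrow> 'v \<Rightarrow> int" where
  "Ninv q h = (\<lambda>x. if x = q then - h x else h x)"

inductive_set Ggrp ::
  "('v \<Rightarrow> 'v \<Rightarrow> bool) \<Rightarrow> ('v letter \<Rightarrow> 'v letter) \<Rightarrow> (nat \<Rightarrow> 'v letter) \<Rightarrow> nat
     \<Rightarrow> (('v \<Rightarrow> int) \<Rightarrow> ('v \<Rightarrow> int)) set"
  for adj star a g where
  G_id: "id \<in> Ggrp adj star a g"
| G_E: "\<lbrakk>A \<in> Ggrp adj star a g; q \<in> suppQ adj star a g; dom_geq adj p q; p \<noteq> q\<rbrakk>
        \<Longrightarrow> Etr p q \<circ> A \<in> Ggrp adj star a g"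
| G_Einv: "\<lbrakk>A \<in> Ggrp adj star a g; q \<in> suppQ adj star a g; dom_geq adj p q; p \<noteq> q\<rbrakk>
        \<Longrightarrow> Etr_inv p q \<circ> A \<in> Ggrp adj star a g"
| G_N: "\<lbrakk>A \<in> Ggrp adj star a g; q \<in> suppQ adj star a g\<rbrakk>
        \<Longrightarrow> Ninv q \<circ> A \<in> Ggrp adj star a g"

definition vstar :: "('v letter \<Rightarrow> 'v letter) \<Rightarrow> 'v \<Rightarrow> 'v" where
  "vstar star b = fst (star (b, True))"

definition Qdom :: "('v \<Rightarrow> 'v \<Rightarrow> bool) \<Rightarrow> ('v letter \<Rightarrow> 'v letter) \<Rightarrow> 'v \<Rightarrow> 'v \<Rightarrow> bool" where
  "Qdom adj star p q \<longleftrightarrow>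
     (p \<noteq> vstar star q \<and> dom_geq adj p q \<and> dom_geq adj (vstar star q) (vstar star p))
     \<or> (p = vstar star q \<and> dom_geq adj p q)"

end

theory Submission
  imports Defs
begin

definition linm :: "(('v::finite \<Rightarrow> int) \<Rightarrow> ('v \<Rightarrow> int)) \<Rightarrow> bool" where
  "linm C \<longleftrightarrow> (\<forall>h. C h = (\<lambda>x. \<Sum>y\<in>UNIV. C (bvec y) x * h y))"

definition patm :: "('v \<Rightarrow> 'v \<Rightarrow> bool) \<Rightarrow> (('v::finite \<Rightarrow> int) \<Rightarrow> ('v \<Rightarrow> int)) \<Rightarrow> bool" where
  "patm adj C \<longleftrightarrow> (\<forall>r s. C (bvec s) r \<noteq> 0 \<longrightarrow> dom_geq adj r s)"

lemma dom_refl: "dom_geq adj v v" by (auto simp: dom_geq_def st_def lk_def)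

lemma dom_trans: "(\<And>x y. adj x y \<Longrightarrow> adj y x) \<Longrightarrow> dom_geq adj v w \<Longrightarrow> dom_geq adj w u \<Longrightarrow> dom_geq adj v u"
  unfolding dom_geq_def st_def lk_def by blast

lemma sum_bvec[simp]: "(\<Sum>y\<in>UNIV. f y * bvec z y) = (f (z::'v::finite) :: int)"
proof -
  have "(\<Sum>y\<in>UNIV. f y * bvec z y) = (\<Sum>y\<in>UNIV. if y = z then f z else 0)" by (rule sum.cong) (auto simp: bvec_def)
  then show ?thesis by simp
qed

lemma sum_bvec2[simp]: "(\<Sum>y\<in>UNIV. bvec y x * h y) = (h (x::'v::finite) :: int)"
proof -
  have "(\<Sum>y\<in>UNIV. bvec y x * h y) = (\<Sum>y\<in>UNIV. if y = x then h x else 0)" by (rule sum.cong) (auto simp: bvec_def)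
  then show ?thesis by simp
qed

lemma linm_app: "linm C \<Longrightarrow> C h x = (\<Sum>y\<in>UNIV. C (bvec y) x * h y)"
  unfolding linm_def by metis

lemma linm_comp: assumes "linm C" "linm D" shows "linm (C \<circ> D)"
  unfolding linm_def
proof (intro allI ext)
  fix h x
  have "(C \<circ> D) h x = (\<Sum>y\<in>UNIV. C (bvec y) x * (\<Sum>z\<in>UNIV. D (bvec z) y * h z))"
    using linm_app[OF assms(1), of "D h" x] linm_app[OF assms(2), of h] by simp
  also have "\<dots> = (\<Sum>y\<in>UNIV. \<Sum>z\<in>UNIV. C (bvec y) x * D (bvec z) y * h z)"
    by (simp add: sum_distrib_left mult.assoc)
  also have "\<dots> = (\<Sum>z\<in>UNIV. \<Sum>y\<in>UNIV. C (bvec y) x * D (bvec z) y * h z)"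
    by (rule sum.swap)
  also have "\<dots> = (\<Sum>z\<in>UNIV. (\<Sum>y\<in>UNIV. C (bvec y) x * D (bvec z) y) * h z)"
    by (simp add: sum_distrib_right)
  also have "\<dots> = (\<Sum>z\<in>UNIV. (C \<circ> D) (bvec z) x * h z)"
  proof -
    have "C (D (bvec z)) x = (\<Sum>y\<in>UNIV. C (bvec y) x * D (bvec z) y)" for z
      by (rule linm_app[OF assms(1)])
    then show ?thesis by simp
  qed
  finally show "(C \<circ> D) h x = (\<Sum>z\<in>UNIV. (C \<circ> D) (bvec z) x * h z)" .
qed

lemma linm_id: "linm id" unfolding linm_def by simp
lemma linm_id': "linm (\<lambda>x. x)" unfolding linm_def by simp
lemma linm_E: "linm (Etr p q)" unfolding linm_def Etr_def
  by (intro allI ext, case_tac "x = p") (simp_all add: sum.distrib distrib_right)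
lemma linm_Ei: "linm (Etr_inv p q)" unfolding linm_def Etr_inv_def
  by (intro allI ext, case_tac "x = p") (simp_all add: sum_subtractf left_diff_distrib)
lemma linm_N: "linm (Ninv q)" unfolding linm_def Ninv_def
  by (intro allI ext, case_tac "x = q") (simp_all add: sum_negf)

lemma bil: "(\<Sum>z\<in>UNIV. \<Sum>w\<in>UNIV. m1 z * m2 w * (l z * l' w - l w * l' z)) =
   (\<Sum>z\<in>UNIV. m1 z * l z) * (\<Sum>w\<in>UNIV. m2 w * l' w) - (\<Sum>z\<in>UNIV. m2 z * l z) * (\<Sum>w\<in>UNIV. m1 w * l' w)"
  for m1 m2 l l' :: "'v::finite \<Rightarrow> int"
proof -
  have "(\<Sum>z\<in>UNIV. \<Sum>w\<in>UNIV. m1 z * m2 w * (l z * l' w - l w * l' z)) =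
     (\<Sum>z\<in>UNIV. \<Sum>w\<in>UNIV. (m1 z * l z) * (m2 w * l' w)) - (\<Sum>z\<in>UNIV. \<Sum>w\<in>UNIV. (m2 w * l w) * (m1 z * l' z))"
    by (simp add: sum_subtractf[symmetric] algebra_simps)
  also have "(\<Sum>z\<in>UNIV. \<Sum>w\<in>UNIV. (m2 w * l w) * (m1 z * l' z)) = (\<Sum>w\<in>UNIV. \<Sum>z\<in>UNIV. (m2 w * l w) * (m1 z * l' z))"
    by (rule sum.swap)
  finally show ?thesis by (simp only: sum_product)
qed


lemma linm_diff: assumes "linm B" shows "B (\<lambda>y. h y - k y) x = B h x - B k x"
  using linm_app[OF assms, of "\<lambda>y. h y - k y" x] linm_app[OF assms, of h x] linm_app[OF assms, of k x]
  by (simp add: right_diff_distrib sum_subtractf)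
lemma linm_add: assumes "linm B" shows "B (\<lambda>y. h y + k y) x = B h x + B k x"
  using linm_app[OF assms, of "\<lambda>y. h y + k y" x] linm_app[OF assms, of h x] linm_app[OF assms, of k x]
  by (simp add: distrib_left sum.distrib)
lemma linm_neg: assumes "linm B" shows "B (\<lambda>y. - h y) x = - B h x"
  using linm_app[OF assms, of "\<lambda>y. - h y" x] linm_app[OF assms, of h x]
  by (simp add: sum_negf)

lemma E_bvec: "Etr p q (bvec s) = (if s = q then (\<lambda>y. bvec q y + bvec p y) else bvec s)"
  by (auto simp: Etr_def bvec_def fun_eq_iff)
lemma Ei_bvec: "Etr_inv p q (bvec s) = (if s = q then (\<lambda>y. bvec q y - bvec p y) else bvec s)"
  by (auto simp: Etr_inv_def bvec_def fun_eq_iff)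
lemma N_bvec: "Ninv q (bvec s) = (if s = q then (\<lambda>y. - bvec s y) else bvec s)"
  by (auto simp: Ninv_def bvec_def fun_eq_iff)

lemma G_props:
  fixes adj :: "'v::finite \<Rightarrow> 'v \<Rightarrow> bool"
  assumes sym: "\<And>x y. adj x y \<Longrightarrow> adj y x" and A: "A \<in> Ggrp adj star a g"
  shows "\<exists>B. (\<forall>h. B (A h) = h) \<and> linm A \<and> linm B \<and> patm adj A \<and> patm adj B"
  using A
proof induction
  case G_id
  show ?case by (intro exI[of _ id]) (auto simp: linm_id linm_id' patm_def bvec_def dom_refl split: if_splits)
next
  case (G_E A q p)
  then obtain B where B: "\<forall>h. B (A h) = h" "linm A" "linm B" "patm adj A" "patm adj B" by blast
  have inv: "Etr_inv p q (Etr p q h) = h" for h using \<open>p \<noteq> q\<close> by (auto simp: Etr_def Etr_inv_def)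
  have pA: "patm adj (Etr p q \<circ> A)"
    unfolding patm_def
  proof (intro allI impI)
    fix r s assume "(Etr p q \<circ> A) (bvec s) r \<noteq> 0"
    then have "A (bvec s) r \<noteq> 0 \<or> (r = p \<and> A (bvec s) q \<noteq> 0)" by (auto simp: Etr_def split: if_splits)
    then show "dom_geq adj r s" using B(4) \<open>dom_geq adj p q\<close> dom_trans[of adj, OF sym] unfolding patm_def by blast
  qed
  have pB: "patm adj (B \<circ> Etr_inv p q)"
    unfolding patm_def
  proof (intro allI impI)
    fix r s assume h: "(B \<circ> Etr_inv p q) (bvec s) r \<noteq> 0"
    show "dom_geq adj r s"
    proof (cases "s = q")
      case True
      then have "B (bvec q) r - B (bvec p) r \<noteq> 0" using h by (simp add: Ei_bvec linm_diff[OF B(3)])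
      then have "B (bvec q) r \<noteq> 0 \<or> B (bvec p) r \<noteq> 0" by auto
      then show ?thesis using B(5) \<open>dom_geq adj p q\<close> dom_trans[of adj, OF sym] True unfolding patm_def by blast
    next
      case False
      then show ?thesis using h B(5) by (simp add: Ei_bvec patm_def)
    qed
  qed
  have l1: "linm (Etr p q \<circ> A)" by (rule linm_comp[OF linm_E B(2)])
  have l2: "linm (B \<circ> Etr_inv p q)" by (rule linm_comp[OF B(3) linm_Ei])
  have "\<forall>h. (B \<circ> Etr_inv p q) ((Etr p q \<circ> A) h) = h" using inv B(1) by simp
  then show ?case using pA pB l1 l2 by blast
next
  case (G_Einv A q p)
  then obtain B where B: "\<forall>h. B (A h) = h" "linm A" "linm B" "patm adj A" "patm adj B" by blast
  have inv: "Etr p q (Etr_inv p q h) = h" for h using \<open>p \<noteq> q\<close> by (auto simp: Etr_def Etr_inv_def)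
  have pA: "patm adj (Etr_inv p q \<circ> A)"
    unfolding patm_def
  proof (intro allI impI)
    fix r s assume "(Etr_inv p q \<circ> A) (bvec s) r \<noteq> 0"
    then have "A (bvec s) r \<noteq> 0 \<or> (r = p \<and> A (bvec s) q \<noteq> 0)" by (auto simp: Etr_inv_def split: if_splits)
    then show "dom_geq adj r s" using B(4) \<open>dom_geq adj p q\<close> dom_trans[of adj, OF sym] unfolding patm_def by blast
  qed
  have pB: "patm adj (B \<circ> Etr p q)"
    unfolding patm_def
  proof (intro allI impI)
    fix r s assume h: "(B \<circ> Etr p q) (bvec s) r \<noteq> 0"
    show "dom_geq adj r s"
    proof (cases "s = q")
      case True
      then have "B (bvec q) r + B (bvec p) r \<noteq> 0" using h by (simp add: E_bvec linm_add[OF B(3)])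
      then have "B (bvec q) r \<noteq> 0 \<or> B (bvec p) r \<noteq> 0" by auto
      then show ?thesis using B(5) \<open>dom_geq adj p q\<close> dom_trans[of adj, OF sym] True unfolding patm_def by blast
    next
      case False
      then show ?thesis using h B(5) by (simp add: E_bvec patm_def)
    qed
  qed
  have l1: "linm (Etr_inv p q \<circ> A)" by (rule linm_comp[OF linm_Ei B(2)])
  have l2: "linm (B \<circ> Etr p q)" by (rule linm_comp[OF B(3) linm_E])
  have "\<forall>h. (B \<circ> Etr p q) ((Etr_inv p q \<circ> A) h) = h" using inv B(1) by simp
  then show ?case using pA pB l1 l2 by blast
next
  case (G_N A q)
  then obtain B where B: "\<forall>h. B (A h) = h" "linm A" "linm B" "patm adj A" "patm adj B" by blast
  have inv: "Ninv q (Ninv q h) = h" for h by (auto simp: Ninv_def)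
  have pA: "patm adj (Ninv q \<circ> A)"
    using B(4) unfolding patm_def by (auto simp: Ninv_def split: if_splits)
  have pB: "patm adj (B \<circ> Ninv q)"
    unfolding patm_def
  proof (intro allI impI)
    fix r s assume h: "(B \<circ> Ninv q) (bvec s) r \<noteq> 0"
    then have "B (bvec s) r \<noteq> 0" by (cases "s = q") (simp_all add: N_bvec linm_neg[OF B(3)])
    then show "dom_geq adj r s" using B(5) unfolding patm_def by blast
  qed
  have l1: "linm (Ninv q \<circ> A)" by (rule linm_comp[OF linm_N B(2)])
  have l2: "linm (B \<circ> Ninv q)" by (rule linm_comp[OF B(3) linm_N])
  have "\<forall>h. (B \<circ> Ninv q) ((Ninv q \<circ> A) h) = h" using inv B(1) by simp
  then show ?case using pA pB l1 l2 by blast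
qed

lemma sum_single: "finite S \<Longrightarrow> i \<in> S \<Longrightarrow> (\<And>j. j \<in> S \<Longrightarrow> j \<noteq> i \<Longrightarrow> f j = 0) \<Longrightarrow> sum f S = f i"
  by (simp add: sum.remove sum.neutral)

lemma swap3: "(\<Sum>x\<in>UNIV. \<Sum>z\<in>UNIV. \<Sum>w\<in>UNIV. F x z w) = (\<Sum>z\<in>UNIV. \<Sum>w\<in>UNIV. \<Sum>x\<in>UNIV. (F x z w :: int))"
  for F :: "'v::finite \<Rightarrow> 'v \<Rightarrow> 'v \<Rightarrow> int"
proof -
  have "(\<Sum>x\<in>UNIV. \<Sum>z\<in>UNIV. \<Sum>w\<in>UNIV. F x z w) = (\<Sum>z\<in>UNIV. \<Sum>x\<in>UNIV. \<Sum>w\<in>UNIV. F x z w)"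
    by (rule sum.swap)
  also have "\<dots> = (\<Sum>z\<in>UNIV. \<Sum>w\<in>UNIV. \<Sum>x\<in>UNIV. F x z w)"
    by (rule sum.cong[OF refl], rule sum.swap)
  finally show ?thesis .
qed

lemma vstar_fst:
  assumes star_star: "\<And>u. star (star u) = linv u"
  shows "vstar star (fst u) = fst (star u)"
proof -
  have sl: "star (linv u) = linv (star u)" for u using star_star by metis
  show ?thesis
  proof (cases "snd u")
    case True
    then have "(fst u, True) = u" by (cases u) auto
    then show ?thesis by (simp add: vstar_def)
  next
    case False
    then have "(fst u, True) = linv u" by (cases u) (auto simp: linv_def)
    then have "fst (star (fst u, True)) = fst (star (linv u))" by simp
    also have "\<dots> = fst (star u)" by (simp only: sl) (simp add: linv_def)
    finally show ?thesis by (simp add: vstar_def)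
  qed
qed


lemma Qact_expand:
  assumes linA: "linm A"
  shows "Qact adj star a g A x y =
    (\<Sum>z\<in>UNIV. \<Sum>w\<in>UNIV. A (bvec z) x * A (bvec w) y * Qform adj star a g z w)"
proof -
  let ?I = "{i. i < g \<and> adj (fst (a i)) (fst (star (a i)))}"
  have Al: "A (lvec u) x' = (\<Sum>z\<in>UNIV. A (bvec z) x' * lvec u z)" for u x' by (rule linm_app[OF linA])
  have "(\<Sum>z\<in>UNIV. \<Sum>w\<in>UNIV. A (bvec z) x * A (bvec w) y * Qform adj star a g z w)
     = (\<Sum>z\<in>UNIV. \<Sum>w\<in>UNIV. \<Sum>i\<in>?I. A (bvec z) x * A (bvec w) y * wedge (lvec (a i)) (lvec (star (a i))) z w)"
    by (simp add: Qform_def Qact_def sum_distrib_left)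
  also have "\<dots> = (\<Sum>i\<in>?I. \<Sum>z\<in>UNIV. \<Sum>w\<in>UNIV. A (bvec z) x * A (bvec w) y * wedge (lvec (a i)) (lvec (star (a i))) z w)"
    by (simp only: sum.swap[where B="?I"])
  also have "\<dots> = (\<Sum>i\<in>?I. wedge (A (lvec (a i))) (A (lvec (star (a i)))) x y)"
    by (rule sum.cong[OF refl]) (simp only: wedge_def bil Al)
  finally show ?thesis by (simp add: Qact_def)
qed

theorem lemma4p7:
  fixes adj :: "'v::finite \<Rightarrow> 'v \<Rightarrow> bool"
    and star :: "'v letter \<Rightarrow> 'v letter"
    and a :: "nat \<Rightarrow> 'v letter"
    and g :: nat
    and A :: "('v \<Rightarrow> int) \<Rightarrow> ('v \<Rightarrow> int)"
    and p q :: 'v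
  assumes adj_sym: "\<And>x y. adj x y \<Longrightarrow> adj y x"
    and adj_irrefl: "\<And>x. \<not> adj x x"
    and card_X: "card (UNIV :: 'v set) = 2 * g"
    and star_bij: "bij star"
    and star_star: "\<And>u. star (star u) = linv u"
    and a_cover: "(\<lambda>i. fst (a i)) ` {..<g} \<union> (\<lambda>i. fst (star (a i))) ` {..<g} = UNIV"
    and Q_nonzero: "Qform adj star a g \<noteq> (\<lambda>x y. 0)"
    and A_in_G: "A \<in> Ggrp adj star a g"
    and A_fixes_Q: "Qact adj star a g A = Qform adj star a g"
    and p_supp: "p \<in> suppQ adj star a g"
    and q_supp: "q \<in> suppQ adj star a g"
    and nonzero: "ip (A (bvec q)) (bvec p) \<noteq> 0"
  shows "p = q \<or> Qdom adj star p q"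
proof -
  define x where "x i = fst (a i)" for i
  define y where "y i = fst (star (a i))" for i
  define I where "I = {i. i < g \<and> adj (x i) (y i)}"
  define QF where "QF = Qform adj star a g"
  from G_props[OF adj_sym A_in_G] obtain B where
    BB: "(\<forall>h. B (A h) = h) \<and> linm A \<and> linm B \<and> patm adj A \<and> patm adj B"
    by (rule exE)
  note B = conjunct1[OF BB] conjunct1[OF conjunct2[OF BB]] conjunct1[OF conjunct2[OF conjunct2[OF BB]]]
    conjunct1[OF conjunct2[OF conjunct2[OF conjunct2[OF BB]]]] conjunct2[OF conjunct2[OF conjunct2[OF conjunct2[OF BB]]]]
  have fX: "finite (x ` {..<g})" "finite (y ` {..<g})" by auto
  have c1: "card (x ` {..<g}) \<le> g" "card (y ` {..<g}) \<le> g"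
    using card_image_le[OF finite_lessThan, of x g] card_image_le[OF finite_lessThan, of y g] by simp_all
  have un: "x ` {..<g} \<union> y ` {..<g} = UNIV" unfolding x_def y_def by (rule a_cover)
  have cu: "card (x ` {..<g} \<union> y ` {..<g}) = 2 * g"
    by (simp only: un card_X)
  have ci: "card (x ` {..<g}) + card (y ` {..<g}) = card (x ` {..<g} \<union> y ` {..<g}) + card (x ` {..<g} \<inter> y ` {..<g})"
    by (rule card_Un_Int[OF fX])
  have cx0: "card (x ` {..<g}) = g" "card (y ` {..<g}) = g"
    "card (x ` {..<g} \<inter> y ` {..<g}) = 0" using c1 cu ci by linarith+
  have injx: "inj_on x {..<g}" by (rule eq_card_imp_inj_on[OF finite_lessThan]) (simp only: cx0 card_lessThan)
  have injy: "inj_on y {..<g}" by (rule eq_card_imp_inj_on[OF finite_lessThan]) (simp only: cx0 card_lessThan)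
  have disj: "x ` {..<g} \<inter> y ` {..<g} = {}" using cx0(3) fX(1) card_0_eq[of "x ` {..<g} \<inter> y ` {..<g}"] by auto
  have xy: "x i \<noteq> y j" if "i < g" "j < g" for i j using disj that by blast
  have vx: "vstar star (x i) = y i" for i unfolding x_def y_def by (rule vstar_fst[OF star_star])
  have vy: "vstar star (y i) = x i" for i unfolding x_def y_def
    by (simp add: vstar_fst[OF star_star] star_star linv_def)
  have QFs: "QF z w = (\<Sum>i\<in>I. lvec (a i) z * lvec (star (a i)) w - lvec (a i) w * lvec (star (a i)) z)" for z w
    by (simp add: QF_def Qform_def Qact_def wedge_def I_def x_def y_def)
  have lv: "lvec u z \<noteq> 0 \<Longrightarrow> z = fst u" for u z by (simp add: lvec_def split: if_splits)
  have char: "\<exists>i\<in>I. (z = x i \<and> w = y i) \<or> (z = y i \<and> w = x i)" if "QF z w \<noteq> 0" for z w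
  proof (rule ccontr)
    assume nc: "\<not> ?thesis"
    have "\<forall>i\<in>I. lvec (a i) z * lvec (star (a i)) w - lvec (a i) w * lvec (star (a i)) z = 0"
    proof
      fix i assume "i \<in> I"
      with nc have "\<not> ((z = x i \<and> w = y i) \<or> (z = y i \<and> w = x i))" by blast
      then show "lvec (a i) z * lvec (star (a i)) w - lvec (a i) w * lvec (star (a i)) z = 0"
        by (auto simp: lvec_def x_def y_def)
    qed
    then have "QF z w = 0" by (simp add: QFs)
    then show False using that by simp
  qed
  have anti: "QF z w = - QF w z" for z w by (simp add: QFs sum_negf[symmetric])
  have Q3: "QF (x i) (y i) \<noteq> 0" if "i \<in> I" for i
  proof -
    have ig: "i < g" using that by (simp add: I_def)
    have "QF (x i) (y i) = lvec (a i) (x i) * lvec (star (a i)) (y i) - lvec (a i) (y i) * lvec (star (a i)) (x i)"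
      unfolding QFs
    proof (rule sum_single)
      show "finite I" by (simp add: I_def)
      show "i \<in> I" by fact
      fix j assume j: "j \<in> I" "j \<noteq> i"
      then have jg: "j < g" by (simp add: I_def)
      have "x j \<noteq> x i" using injx j ig jg by (meson inj_on_def lessThan_iff)
      moreover have "x j \<noteq> y i" using xy jg ig by blast
      ultimately show "lvec (a j) (x i) * lvec (star (a j)) (y i) - lvec (a j) (y i) * lvec (star (a j)) (x i) = 0"
        by (simp add: lvec_def x_def)
    qed
    moreover have "x i \<noteq> y i" using xy ig by blast
    ultimately show ?thesis by (simp add: lvec_def x_def y_def)
  qed
  have suppI: "\<exists>i\<in>I. r = x i \<or> r = y i" if "r \<in> suppQ adj star a g" for r
    using that by (auto simp: suppQ_def I_def x_def y_def)
  have Q1: "QF z p = 0" if "z \<noteq> vstar star p" for z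
  proof (rule ccontr)
    assume "QF z p \<noteq> 0"
    from char[OF this] obtain i where "(z = x i \<and> p = y i) \<or> (z = y i \<and> p = x i)" by blast
    then show False using that vx vy by auto
  qed
  have Q2: "QF (vstar star q) w = 0" if "w \<noteq> q" for w
  proof (rule ccontr)
    assume "QF (vstar star q) w \<noteq> 0"
    from char[OF this] obtain i where i: "i \<in> I" "(vstar star q = x i \<and> w = y i) \<or> (vstar star q = y i \<and> w = x i)" by blast
    from suppI[OF q_supp] obtain j where j: "j \<in> I" "q = x j \<or> q = y j" by blast
    have ig: "i < g" "j < g" using i j by (auto simp: I_def)
    from j(2) show False
    proof
      assume qj: "q = x j"
      then have "vstar star q = y j" using vx by simp
      then have "y j = y i \<and> w = x i" using i(2) xy[OF ig(1) ig(2)] by auto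
      then have "i = j" using injy ig by (metis inj_on_def lessThan_iff)
      then show False using qj \<open>y j = y i \<and> w = x i\<close> that by simp
    next
      assume qj: "q = y j"
      then have "vstar star q = x j" using vy by simp
      then have "x j = x i \<and> w = y i" using i(2) xy[OF ig(2) ig(1)] by auto
      then have "i = j" using injx ig by (metis inj_on_def lessThan_iff)
      then show False using qj \<open>x j = x i \<and> w = y i\<close> that by simp
    qed
  qed
  have Q3q: "QF (vstar star q) q \<noteq> 0" and Q3p: "QF (vstar star p) p \<noteq> 0"
  proof -
    have "QF (vstar star r) r \<noteq> 0" if "r \<in> suppQ adj star a g" for r
    proof -
      from suppI[OF that] obtain j where j: "j \<in> I" "r = x j \<or> r = y j" by blast
      then show ?thesis using Q3[OF j(1)] vx vy anti[of "y j" "x j"] by auto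
    qed
    then show "QF (vstar star q) q \<noteq> 0" "QF (vstar star p) p \<noteq> 0" using q_supp p_supp by auto
  qed
  have fix': "(\<Sum>z\<in>UNIV. \<Sum>w\<in>UNIV. A (bvec z) x' * A (bvec w) y' * QF z w) = QF x' y'" for x' y'
    using Qact_expand[OF B(2), of adj star a g x' y'] A_fixes_Q unfolding QF_def by simp
  have NM: "(\<Sum>x'\<in>UNIV. B (bvec x') u * A (bvec z) x') = bvec z u" for u z
    using linm_app[OF B(3), of "A (bvec z)" u] B(1) by simp
  have key: "(\<Sum>w\<in>UNIV. A (bvec w) y' * QF u w) = (\<Sum>x'\<in>UNIV. B (bvec x') u * QF x' y')" for u y'
  proof -
    have "(\<Sum>x'\<in>UNIV. B (bvec x') u * QF x' y')
        = (\<Sum>x'\<in>UNIV. B (bvec x') u * (\<Sum>z\<in>UNIV. \<Sum>w\<in>UNIV. A (bvec z) x' * (A (bvec w) y' * QF z w)))"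
      using fix' by (simp add: mult.assoc)
    also have "\<dots> = (\<Sum>x'\<in>UNIV. \<Sum>z\<in>UNIV. \<Sum>w\<in>UNIV. B (bvec x') u * A (bvec z) x' * (A (bvec w) y' * QF z w))"
      by (simp add: sum_distrib_left mult.assoc)
    also have "\<dots> = (\<Sum>z\<in>UNIV. \<Sum>w\<in>UNIV. \<Sum>x'\<in>UNIV. B (bvec x') u * A (bvec z) x' * (A (bvec w) y' * QF z w))"
      by (rule swap3)
    also have "\<dots> = (\<Sum>z\<in>UNIV. \<Sum>w\<in>UNIV. bvec z u * (A (bvec w) y' * QF z w))"
      by (simp add: sum_distrib_right[symmetric] NM)
    also have "\<dots> = (\<Sum>z\<in>UNIV. bvec z u * (\<Sum>w\<in>UNIV. A (bvec w) y' * QF z w))"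
      by (simp add: sum_distrib_left)
    also have "\<dots> = (\<Sum>w\<in>UNIV. A (bvec w) y' * QF u w)" by (rule sum_bvec2)
    finally show ?thesis by simp
  qed
  have lhs: "(\<Sum>w\<in>UNIV. A (bvec w) p * QF (vstar star q) w) = A (bvec q) p * QF (vstar star q) q"
    by (rule sum_single) (auto simp: Q2)
  have rhs: "(\<Sum>x'\<in>UNIV. B (bvec x') (vstar star q) * QF x' p) = B (bvec (vstar star p)) (vstar star q) * QF (vstar star p) p"
    by (rule sum_single) (auto simp: Q1)
  have Mpq: "A (bvec q) p \<noteq> 0" using nonzero by (simp add: ip_def)
  have "B (bvec (vstar star p)) (vstar star q) * QF (vstar star p) p \<noteq> 0"
  proof -
    have e: "A (bvec q) p * QF (vstar star q) q = B (bvec (vstar star p)) (vstar star q) * QF (vstar star p) p"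
      using key[of p "vstar star q"] lhs rhs by simp
    have "A (bvec q) p * QF (vstar star q) q \<noteq> 0" using Mpq Q3q by simp
    then show ?thesis using e by simp
  qed
  then have "B (bvec (vstar star p)) (vstar star q) \<noteq> 0" by auto
  then have d2: "dom_geq adj (vstar star q) (vstar star p)" using B(5) unfolding patm_def by blast
  have d1: "dom_geq adj p q" using B(4) Mpq unfolding patm_def by blast
  show ?thesis using d1 d2 unfolding Qdom_def by blast
qed

end
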